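(* Let $G$ be a set, $L$ a normal modal logic with the finite model property, $T$ a set of formulas, and $\kappa$ a regular cardinal with $\kappa>2^{|\mathrm{Fm}_\omega(G)|}$. Then for each $\varphi\in\mathrm{Fm}_\kappa(G)$ there is a family $\mathscr S\subseteq\mathcal P(\mathrm{Fm}_\omega(G))$ such that $(G,\kappa,L,T)\vdash\ \Rightarrow \varphi\leftrightarrow\bigwedge\{\bigvee S\mid S\in\mathscr S\}$.
   Context: $\mathrm{Fm}_\kappa(G)$ is the least set containing $G$ closed under $\neg$, $\Box$, and $\bigwedge S,\bigvee S$ for sets $S$ of size $<\kappa$; $\mathrm{Fm}_\omega(G)$ is the set of ordinary finitary formulas (conjunctions/disjunctions of finite sets). $\varphi\leftrightarrow\psi$ abbreviates $(\neg\varphi\vee\psi)\wedge(\neg\psi\vee\varphi)$. The calculus $(G,\kappa,L,T)$ with $T\subseteq \mathrm{Fm}_\kappa(G)$ has rules: (Ax) $\varphi\Rightarrow\varphi$; (W) from $\Gamma\Rightarrow\Delta$ infer $\Gamma,\Gamma'\Rightarrow\Delta,\Delta'$; (Cut) from $\Gamma\Rightarrow\Delta,\varphi$ for every $\varphi\in S$ and $S,\Gamma'\Rightarrow\Delta'$ infer $\Gamma,\Gamma'\Rightarrow\Delta,\Delta'$; (L$\neg$) from $\Gamma\Rightarrow\Delta,S$ infer $\neg S,\Gamma\Rightarrow\Delta$; (R$\neg$) from $S,\Gamma\Rightarrow\Delta$ infer $\Gamma\Rightarrow\Delta,\neg S$; for a family $\mathscr S$ of sets each of size $<\kappa$: (L$\bigwedge$)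 from $\bigcup\mathscr S,\Gamma\Rightarrow\Delta$ infer $\{\bigwedge S:S\in\mathscr S\},\Gamma\Rightarrow\Delta$; (R$\bigwedge$) from $\Gamma\Rightarrow\Delta,\{c(S):S\in\mathscr S\}$ for every choice function $c$ infer $\Gamma\Rightarrow\Delta,\{\bigwedge S:S\in\mathscr S\}$; (L$\bigvee$) from $\{c(S)\},\Gamma\Rightarrow\Delta$ for every choice function $c$ infer $\{\bigvee S:S\in\mathscr S\},\Gamma\Rightarrow\Delta$; (R$\bigvee$) from $\Gamma\Rightarrow\Delta,\bigcup\mathscr S$ infer $\Gamma\Rightarrow\Delta,\{\bigvee S\}$; (Nec) from $S\Rightarrow\varphi$ infer $\Box S\Rightarrow\Box\varphi$; (lf) for sets $S_n$ of size $<\kappa$: from $\{\Box^n\bigvee(I\cap S_n):n\in\omega\},\Gamma\Rightarrow\Delta$ for every finite $I\subseteq\bigcup_nS_n$ infer $\{\Box^n\bigvee S_n:n\in\omega\},\Gamma\Rightarrow\Delta$; (T,L) from $S,\Gamma\Rightarrow\Delta$ infer $\Gamma\Rightarrow\Delta$ for $S\subseteq T\cup L_{(G,\kappa)}$ (substitution instances of theorems of $L$). Proofs are well-founded trees. *)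

theory Defs imports Main "HOL-Library.FSet" begin

unbundle cardinal_syntax

text \<open>Formulas of Fm_kappa(G) are well-founded trees in which conjunctions and
  disjunctions are taken of SETS of formulas. Since a datatype cannot be nested
  through the (unbounded) powerset, we first introduce raw trees whose conjunction
  and disjunction nodes are indexed by a type k (partial functions k => raw tree),
  and then identify raw trees extensionally: two conjunctions are identified iff
  their sets of immediate subformulas coincide (hereditarily). The quotient type
  fm therefore has exactly the formulas-with-set-branching as elements, for all
  sets of cardinality at most |UNIV :: k set|; the cardinal kappa of the paper is
  |UNIV :: k set| and Fm_kappa G only uses sets of size < kappa.\<close>

datatype ('g,'k) pfm = PVar 'g | PNeg "('g,'k) pfm" | PBox "('g,'k) pfm"
  | PConj "'k \<Rightarrow> ('g,'k) pfm option" | PDisj "'k \<Rightarrow> ('g,'k) pfm option"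

inductive peq :: "('g,'k) pfm \<Rightarrow> ('g,'k) pfm \<Rightarrow> bool" where
  "peq (PVar g) (PVar g)"
| "peq a b \<Longrightarrow> peq (PNeg a) (PNeg b)"
| "peq a b \<Longrightarrow> peq (PBox a) (PBox b)"
| "(\<forall>i a. f i = Some a \<longrightarrow> (\<exists>j b. h j = Some b \<and> peq a b)) \<Longrightarrow>
   (\<forall>j b. h j = Some b \<longrightarrow> (\<exists>i a. f i = Some a \<and> peq a b)) \<Longrightarrow>
   peq (PConj f) (PConj h)"
| "(\<forall>i a. f i = Some a \<longrightarrow> (\<exists>j b. h j = Some b \<and> peq a b)) \<Longrightarrow>
   (\<forall>j b. h j = Some b \<longrightarrow> (\<exists>i a. f i = Some a \<and> peq a b)) \<Longrightarrow>
   peq (PDisj f) (PDisj h)"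

lemma peq_refl: "peq x x"
proof (induction x)
  case (PConj f)
  show ?case
  proof (rule peq.intros(4))
    show "\<forall>i a. f i = Some a \<longrightarrow> (\<exists>j b. f j = Some b \<and> peq a b)"
      using PConj by (metis option.set_intros rangeI)
    show "\<forall>j b. f j = Some b \<longrightarrow> (\<exists>i a. f i = Some a \<and> peq a b)"
      using PConj by (metis option.set_intros rangeI)
  qed
next
  case (PDisj f)
  show ?case
  proof (rule peq.intros(5))
    show "\<forall>i a. f i = Some a \<longrightarrow> (\<exists>j b. f j = Some b \<and> peq a b)"
      using PDisj by (metis option.set_intros rangeI)
    show "\<forall>j b. f j = Some b \<longrightarrow> (\<exists>i a. f i = Some a \<and> peq a b)"
      using PDisj by (metis option.set_intros rangeI)
  qed
qed (auto intro: peq.intros)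

lemma peq_sym: "peq x y \<Longrightarrow> peq y x"
proof (induction rule: peq.induct)
  case (4 f h)
  show ?case
  proof (rule peq.intros(4))
    show "\<forall>i a. h i = Some a \<longrightarrow> (\<exists>j b. f j = Some b \<and> peq a b)" using 4(2) by blast
    show "\<forall>j b. f j = Some b \<longrightarrow> (\<exists>i a. h i = Some a \<and> peq a b)" using 4(1) by blast
  qed
next
  case (5 f h)
  show ?case
  proof (rule peq.intros(5))
    show "\<forall>i a. h i = Some a \<longrightarrow> (\<exists>j b. f j = Some b \<and> peq a b)" using 5(2) by blast
    show "\<forall>j b. f j = Some b \<longrightarrow> (\<exists>i a. h i = Some a \<and> peq a b)" using 5(1) by blast
  qed
qed (auto intro: peq.intros)

lemma peq_trans: "peq x y \<Longrightarrow> peq y z \<Longrightarrow> peq x z"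
proof (induction x y arbitrary: z rule: peq.induct)
  case (1 g)
  then show ?case by simp
next
  case (2 a b)
  from 2(3) obtain c where "z = PNeg c" "peq b c" by (cases rule: peq.cases) auto
  then show ?case using 2(2) by (auto intro: peq.intros)
next
  case (3 a b)
  from 3(3) obtain c where "z = PBox c" "peq b c" by (cases rule: peq.cases) auto
  then show ?case using 3(2) by (auto intro: peq.intros)
next
  case (4 f h)
  from 4(3) obtain k where z: "z = PConj k"
    and hk1: "\<forall>i a. h i = Some a \<longrightarrow> (\<exists>j b. k j = Some b \<and> peq a b)"
    and hk2: "\<forall>j b. k j = Some b \<longrightarrow> (\<exists>i a. h i = Some a \<and> peq a b)"
    by (cases rule: peq.cases) auto
  show ?case unfolding z
  proof (rule peq.intros(4))
    show "\<forall>i a. f i = Some a \<longrightarrow> (\<exists>j b. k j = Some b \<and> peq a b)"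
      using 4(1) hk1 by metis
    show "\<forall>j b. k j = Some b \<longrightarrow> (\<exists>i a. f i = Some a \<and> peq a b)"
      using 4(2) hk2 by metis
  qed
next
  case (5 f h)
  from 5(3) obtain k where z: "z = PDisj k"
    and hk1: "\<forall>i a. h i = Some a \<longrightarrow> (\<exists>j b. k j = Some b \<and> peq a b)"
    and hk2: "\<forall>j b. k j = Some b \<longrightarrow> (\<exists>i a. h i = Some a \<and> peq a b)"
    by (cases rule: peq.cases) auto
  show ?case unfolding z
  proof (rule peq.intros(5))
    show "\<forall>i a. f i = Some a \<longrightarrow> (\<exists>j b. k j = Some b \<and> peq a b)"
      using 5(1) hk1 by metis
    show "\<forall>j b. k j = Some b \<longrightarrow> (\<exists>i a. f i = Some a \<and> peq a b)"
      using 5(2) hk2 by metis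
  qed
qed

lemma equivp_peq: "equivp peq"
  by (rule equivpI) (auto simp: reflp_def symp_def transp_def intro: peq_refl peq_sym peq_trans)

quotient_type ('g,'k) fm = "('g,'k) pfm" / peq
  by (rule equivp_peq)

lift_definition Var :: "'g \<Rightarrow> ('g,'k) fm" is PVar .

lift_definition Neg :: "('g,'k) fm \<Rightarrow> ('g,'k) fm" is PNeg
  by (rule peq.intros)

lift_definition Box :: "('g,'k) fm \<Rightarrow> ('g,'k) fm" is PBox
  by (rule peq.intros)

text \<open>Conj S and Disj S: conjunction/disjunction of a set S of formulas (meaningful
  for |S| at most |UNIV :: k set|, in particular for every S of size < kappa).\<close>
definition Conj :: "('g,'k) fm set \<Rightarrow> ('g,'k) fm" where
  "Conj S = abs_fm (PConj (SOME f. abs_fm ` {a. Some a \<in> range f} = S))"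

definition Disj :: "('g,'k) fm set \<Rightarrow> ('g,'k) fm" where
  "Disj S = abs_fm (PDisj (SOME f. abs_fm ` {a. Some a \<in> range f} = S))"

inductive_set Fm_kappa :: "'g set \<Rightarrow> ('g,'k) fm set" for G :: "'g set" where
  "g \<in> G \<Longrightarrow> Var g \<in> Fm_kappa G"
| "\<phi> \<in> Fm_kappa G \<Longrightarrow> Neg \<phi> \<in> Fm_kappa G"
| "\<phi> \<in> Fm_kappa G \<Longrightarrow> Box \<phi> \<in> Fm_kappa G"
| "|S| <o |UNIV :: 'k set| \<Longrightarrow> (\<forall>\<psi>\<in>S. \<psi> \<in> Fm_kappa G) \<Longrightarrow> Conj S \<in> Fm_kappa G"
| "|S| <o |UNIV :: 'k set| \<Longrightarrow> (\<forall>\<psi>\<in>S. \<psi> \<in> Fm_kappa G) \<Longrightarrow> Disj S \<in> Fm_kappa G"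

inductive_set Fm_omega :: "'g set \<Rightarrow> ('g,'k) fm set" for G :: "'g set" where
  "g \<in> G \<Longrightarrow> Var g \<in> Fm_omega G"
| "\<phi> \<in> Fm_omega G \<Longrightarrow> Neg \<phi> \<in> Fm_omega G"
| "\<phi> \<in> Fm_omega G \<Longrightarrow> Box \<phi> \<in> Fm_omega G"
| "finite S \<Longrightarrow> (\<forall>\<psi>\<in>S. \<psi> \<in> Fm_omega G) \<Longrightarrow> Conj S \<in> Fm_omega G"
| "finite S \<Longrightarrow> (\<forall>\<psi>\<in>S. \<psi> \<in> Fm_omega G) \<Longrightarrow> Disj S \<in> Fm_omega G"

definition fm_iff :: "('g,'k) fm \<Rightarrow> ('g,'k) fm \<Rightarrow> ('g,'k) fm" where
  "fm_iff \<phi> \<psi> = Conj {Disj {Neg \<phi>, \<psi>}, Disj {Neg \<psi>, \<phi>}}"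

datatype 'v mfm = MVar 'v | MNeg "'v mfm" | MBox "'v mfm"
  | MConj "'v mfm fset" | MDisj "'v mfm fset"

definition mimp :: "'v mfm \<Rightarrow> 'v mfm \<Rightarrow> 'v mfm" where
  "mimp \<phi> \<psi> = MDisj {|MNeg \<phi>, \<psi>|}"

text \<open>Classical (propositional) evaluation, boxed formulas being treated as atoms;
  tautologies are exactly the substitution instances of classical tautologies.\<close>
primrec peval :: "('v mfm \<Rightarrow> bool) \<Rightarrow> 'v mfm \<Rightarrow> bool" where
  "peval a (MVar p) = a (MVar p)"
| "peval a (MNeg \<phi>) = (\<not> peval a \<phi>)"
| "peval a (MBox \<phi>) = a (MBox \<phi>)"
| "peval a (MConj F) = (\<forall>b\<in>fset (fimage (peval a) F). b)"
| "peval a (MDisj F) = (\<exists>b\<in>fset (fimage (peval a) F). b)"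

definition tautology :: "'v mfm \<Rightarrow> bool" where
  "tautology \<phi> \<longleftrightarrow> (\<forall>a. peval a \<phi>)"

primrec msubst :: "('v \<Rightarrow> 'u mfm) \<Rightarrow> 'v mfm \<Rightarrow> 'u mfm" where
  "msubst \<sigma> (MVar p) = \<sigma> p"
| "msubst \<sigma> (MNeg \<phi>) = MNeg (msubst \<sigma> \<phi>)"
| "msubst \<sigma> (MBox \<phi>) = MBox (msubst \<sigma> \<phi>)"
| "msubst \<sigma> (MConj F) = MConj (fimage (msubst \<sigma>) F)"
| "msubst \<sigma> (MDisj F) = MDisj (fimage (msubst \<sigma>) F)"

definition normal_modal_logic :: "nat mfm set \<Rightarrow> bool" where
  "normal_modal_logic L \<longleftrightarrow>
     (\<forall>\<phi>. tautology \<phi> \<longrightarrow> \<phi> \<in> L) \<and>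
     (\<forall>\<phi> \<psi>. mimp (MBox (mimp \<phi> \<psi>)) (mimp (MBox \<phi>) (MBox \<psi>)) \<in> L) \<and>
     (\<forall>\<phi> \<psi>. \<phi> \<in> L \<longrightarrow> mimp \<phi> \<psi> \<in> L \<longrightarrow> \<psi> \<in> L) \<and>
     (\<forall>\<phi>. \<phi> \<in> L \<longrightarrow> MBox \<phi> \<in> L) \<and>
     (\<forall>\<sigma> \<phi>. \<phi> \<in> L \<longrightarrow> msubst \<sigma> \<phi> \<in> L)"

primrec msat :: "('w \<times> 'w) set \<Rightarrow> ('v \<Rightarrow> 'w set) \<Rightarrow> 'w \<Rightarrow> 'v mfm \<Rightarrow> bool" where
  "msat R V w (MVar p) = (w \<in> V p)"
| "msat R V w (MNeg \<phi>) = (\<not> msat R V w \<phi>)"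
| "msat R V w (MBox \<phi>) = (\<forall>u. (w, u) \<in> R \<longrightarrow> msat R V u \<phi>)"
| "msat R V w (MConj F) = (\<forall>b\<in>fset (fimage (msat R V w) F). b)"
| "msat R V w (MDisj F) = (\<exists>b\<in>fset (fimage (msat R V w) F). b)"

definition frame_valid :: "'w set \<Rightarrow> ('w \<times> 'w) set \<Rightarrow> 'v mfm \<Rightarrow> bool" where
  "frame_valid W R \<phi> \<longleftrightarrow> (\<forall>V w. w \<in> W \<longrightarrow> msat R V w \<phi>)"

text \<open>Finite model property: every non-theorem is refuted on some finite frame
  validating L (finite frames taken, up to isomorphism, with worlds in nat).\<close>
definition finite_model_property :: "nat mfm set \<Rightarrow> bool" where
  "finite_model_property L \<longleftrightarrow>
     (\<forall>\<phi>. \<phi> \<notin> L \<longrightarrow> (\<exists>(W :: nat set) R. finite W \<and> R \<subseteq> W \<times> W \<and>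
         (\<forall>\<psi>\<in>L. frame_valid W R \<psi>) \<and> \<not> frame_valid W R \<phi>))"

primrec inst :: "('v \<Rightarrow> ('g,'k) fm) \<Rightarrow> 'v mfm \<Rightarrow> ('g,'k) fm" where
  "inst \<sigma> (MVar p) = \<sigma> p"
| "inst \<sigma> (MNeg \<phi>) = Neg (inst \<sigma> \<phi>)"
| "inst \<sigma> (MBox \<phi>) = Box (inst \<sigma> \<phi>)"
| "inst \<sigma> (MConj F) = Conj (fset (fimage (inst \<sigma>) F))"
| "inst \<sigma> (MDisj F) = Disj (fset (fimage (inst \<sigma>) F))"

definition L_inst :: "'g set \<Rightarrow> nat mfm set \<Rightarrow> ('g,'k) fm set" where
  "L_inst G L = {inst \<sigma> \<psi> | \<sigma> \<psi>. \<psi> \<in> L \<and> (\<forall>p. \<sigma> p \<in> Fm_kappa G)}"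

text \<open>Derivability of sequents Gamma => Delta (sets of formulas of Fm_kappa G); the
  inductive definition corresponds to well-founded (possibly infinitely branching)
  proof trees. Side conditions keep all formulas inside Fm_kappa G.\<close>
inductive deriv :: "'g set \<Rightarrow> nat mfm set \<Rightarrow> ('g,'k) fm set \<Rightarrow>
    ('g,'k) fm set \<Rightarrow> ('g,'k) fm set \<Rightarrow> bool"
  for G :: "'g set" and L :: "nat mfm set" and T :: "('g,'k) fm set" where
  Ax: "\<phi> \<in> Fm_kappa G \<Longrightarrow> deriv G L T {\<phi>} {\<phi>}"
| W: "deriv G L T \<Gamma> \<Delta> \<Longrightarrow> \<Gamma>' \<union> \<Delta>' \<subseteq> Fm_kappa G \<Longrightarrow>
      deriv G L T (\<Gamma> \<union> \<Gamma>') (\<Delta> \<union> \<Delta>')"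
| Cut: "(\<forall>\<phi>\<in>S. deriv G L T \<Gamma> (\<Delta> \<union> {\<phi>})) \<Longrightarrow> deriv G L T (S \<union> \<Gamma>') \<Delta>' \<Longrightarrow>
      \<Gamma> \<union> \<Delta> \<subseteq> Fm_kappa G \<Longrightarrow> deriv G L T (\<Gamma> \<union> \<Gamma>') (\<Delta> \<union> \<Delta>')"
| LNeg: "deriv G L T \<Gamma> (\<Delta> \<union> S) \<Longrightarrow> deriv G L T (Neg ` S \<union> \<Gamma>) \<Delta>"
| RNeg: "deriv G L T (S \<union> \<Gamma>) \<Delta> \<Longrightarrow> deriv G L T \<Gamma> (\<Delta> \<union> Neg ` S)"
| LConj: "(\<forall>S\<in>\<SS>. |S| <o |UNIV :: 'k set| ) \<Longrightarrow>
      deriv G L T (\<Union>\<SS> \<union> \<Gamma>) \<Delta> \<Longrightarrow>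
      deriv G L T (Conj ` \<SS> \<union> \<Gamma>) \<Delta>"
| RConj: "(\<forall>S\<in>\<SS>. |S| <o |UNIV :: 'k set| \<and> S \<subseteq> Fm_kappa G) \<Longrightarrow>
      (\<forall>c. (\<forall>S\<in>\<SS>. c S \<in> S) \<longrightarrow> deriv G L T \<Gamma> (\<Delta> \<union> c ` \<SS>)) \<Longrightarrow>
      \<Gamma> \<union> \<Delta> \<subseteq> Fm_kappa G \<Longrightarrow>
      deriv G L T \<Gamma> (\<Delta> \<union> Conj ` \<SS>)"
| LDisj: "(\<forall>S\<in>\<SS>. |S| <o |UNIV :: 'k set| \<and> S \<subseteq> Fm_kappa G) \<Longrightarrow>
      (\<forall>c. (\<forall>S\<in>\<SS>. c S \<in> S) \<longrightarrow> deriv G L T (c ` \<SS> \<union> \<Gamma>) \<Delta>) \<Longrightarrow>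
      \<Gamma> \<union> \<Delta> \<subseteq> Fm_kappa G \<Longrightarrow>
      deriv G L T (Disj ` \<SS> \<union> \<Gamma>) \<Delta>"
| RDisj: "(\<forall>S\<in>\<SS>. |S| <o |UNIV :: 'k set| ) \<Longrightarrow>
      deriv G L T \<Gamma> (\<Delta> \<union> \<Union>\<SS>) \<Longrightarrow>
      deriv G L T \<Gamma> (\<Delta> \<union> Disj ` \<SS>)"
| Nec: "deriv G L T S {\<phi>} \<Longrightarrow> deriv G L T (Box ` S) {Box \<phi>}"
| lf: "(\<forall>n. |Sn n| <o |UNIV :: 'k set| \<and> Sn n \<subseteq> Fm_kappa G) \<Longrightarrow>
      (\<forall>I. finite I \<and> I \<subseteq> (\<Union>n. Sn n) \<longrightarrow>
         deriv G L T (range (\<lambda>n. (Box ^^ n) (Disj (I \<inter> Sn n))) \<union> \<Gamma>) \<Delta>) \<Longrightarrow>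
      \<Gamma> \<union> \<Delta> \<subseteq> Fm_kappa G \<Longrightarrow>
      deriv G L T (range (\<lambda>n. (Box ^^ n) (Disj (Sn n))) \<union> \<Gamma>) \<Delta>"
| TL: "deriv G L T (S \<union> \<Gamma>) \<Delta> \<Longrightarrow> S \<subseteq> T \<union> L_inst G L \<Longrightarrow> deriv G L T \<Gamma> \<Delta>"

end

theory Submission imports Defs begin

lemma funpow_box: "\<phi> \<in> Fm_kappa G \<Longrightarrow> (Box ^^ n) \<phi> \<in> Fm_kappa G"
  by (induction n) (auto intro: Fm_kappa.intros)

context
  fixes G :: "'g set" and L :: "nat mfm set" and T :: "('g,'k) fm set"
  assumes PowS: "|Pow (Fm_omega G :: ('g,'k) fm set)| <o |UNIV :: 'k set|"
begin

abbreviation D where "D \<equiv> deriv G L T"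
abbreviation F where "F \<equiv> (Fm_kappa G :: ('g,'k) fm set)"
abbreviation FO where "FO \<equiv> (Fm_omega G :: ('g,'k) fm set)"
abbreviation eqv where "eqv a b \<equiv> D {a} {b} \<and> D {b} {a}"

lemma D_F: "D \<Gamma> \<Delta> \<Longrightarrow> \<Gamma> \<union> \<Delta> \<subseteq> F"
proof (induction rule: deriv.induct)
  case (RDisj SS \<Gamma> \<Delta>)
  have "Disj ` SS \<subseteq> F" using RDisj Fm_kappa.intros(5)[of _ G] by blast
  then show ?case using RDisj by auto
next
  case (LConj SS \<Gamma> \<Delta>)
  have "Conj ` SS \<subseteq> F" using LConj Fm_kappa.intros(4)[of _ G] by blast
  then show ?case using LConj by auto
qed (auto intro: Fm_kappa.intros funpow_box)

lemma small_PFO: "A \<subseteq> Pow FO \<Longrightarrow> |A| <o |UNIV :: 'k set|"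
  using card_of_mono1 ordLeq_ordLess_trans PowS by blast

lemma small_FO: "A \<subseteq> FO \<Longrightarrow> |A| <o |UNIV :: 'k set|"
proof -
  assume "A \<subseteq> FO"
  then have "|A| \<le>o |FO|" by (rule card_of_mono1)
  moreover have "|FO| <o |Pow FO|" by (rule card_of_Pow)
  ultimately show ?thesis using ordLeq_ordLess_trans[OF _ ordLess_transitive[OF _ PowS]] by blast
qed

lemma small_image: "|A| <o |UNIV :: 'k set| \<Longrightarrow> |(f ` A)| <o |UNIV :: 'k set|"
  using card_of_image ordLeq_ordLess_trans by blast

lemma small_sub: "A \<subseteq> B \<Longrightarrow> |B| <o |UNIV :: 'k set| \<Longrightarrow> |A| <o |UNIV :: 'k set|"
  using card_of_mono1 ordLeq_ordLess_trans by blast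

lemma top_FO: "Conj {} \<in> FO"
  by (rule Fm_omega.intros(4)) auto

lemma small_pair: "|{a, b}| <o |UNIV :: 'k set|"
proof -
  have "{a, b} = (\<lambda>X. if X = {} then a else b) ` {{}, {Conj {}}}" by auto
  moreover have "|{{}, {Conj {} :: ('g,'k) fm}}| <o |UNIV :: 'k set|"
    using top_FO by (intro small_PFO) auto
  ultimately show ?thesis using small_image[of _ "\<lambda>X. if X = {} then a else b"] by (metis (no_types))
qed

lemma small_single: "|{a}| <o |UNIV :: 'k set|"
  using small_pair[of a a] by simp

lemma small_empty: "|{}| <o |UNIV :: 'k set|"
  using small_sub[OF empty_subsetI small_single] by blast

lemma FO_F: "FO \<subseteq> F"
proof
  fix x assume "x \<in> FO" then show "x \<in> F"
  proof (induction rule: Fm_omega.induct)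
    case (4 S) then show ?case using small_FO[of S] by (auto intro: Fm_kappa.intros)
  next
    case (5 S) then show ?case using small_FO[of S] by (auto intro: Fm_kappa.intros)
  qed (auto intro: Fm_kappa.intros)
qed

lemma disjF: "s \<subseteq> FO \<Longrightarrow> Disj s \<in> F"
  using FO_F small_FO by (auto intro: Fm_kappa.intros)

lemma cnfF: "S \<subseteq> Pow FO \<Longrightarrow> Conj (Disj ` S) \<in> F"
proof -
  assume a: "S \<subseteq> Pow FO"
  show ?thesis
  proof (rule Fm_kappa.intros(4))
    show "|Disj ` S| <o |UNIV :: 'k set|" by (rule small_image[OF small_PFO[OF a]])
    show "\<forall>\<psi>\<in>Disj ` S. \<psi> \<in> F" using a disjF by auto
  qed
qed

lemma wk: "D \<Gamma> \<Delta> \<Longrightarrow> \<Gamma> \<subseteq> \<Gamma>' \<Longrightarrow> \<Delta> \<subseteq> \<Delta>' \<Longrightarrow> \<Gamma>' \<union> \<Delta>' \<subseteq> F \<Longrightarrow> D \<Gamma>' \<Delta>'"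
proof -
  assume a: "D \<Gamma> \<Delta>" "\<Gamma> \<subseteq> \<Gamma>'" "\<Delta> \<subseteq> \<Delta>'" "\<Gamma>' \<union> \<Delta>' \<subseteq> F"
  have "D (\<Gamma> \<union> \<Gamma>') (\<Delta> \<union> \<Delta>')" by (rule deriv.W) (use a in auto)
  moreover have "\<Gamma> \<union> \<Gamma>' = \<Gamma>'" "\<Delta> \<union> \<Delta>' = \<Delta>'" using a by auto
  ultimately show ?thesis by simp
qed

lemma axw: "\<phi> \<in> \<Gamma> \<Longrightarrow> \<phi> \<in> \<Delta> \<Longrightarrow> \<Gamma> \<union> \<Delta> \<subseteq> F \<Longrightarrow> D \<Gamma> \<Delta>"
  by (rule wk[OF deriv.Ax[of \<phi>]]) auto

lemma cut1: "D \<Gamma> (insert \<phi> \<Delta>) \<Longrightarrow> D (insert \<phi> \<Gamma>) \<Delta> \<Longrightarrow> D \<Gamma> \<Delta>"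
proof -
  assume a: "D \<Gamma> (insert \<phi> \<Delta>)" "D (insert \<phi> \<Gamma>) \<Delta>"
  have "D (\<Gamma> \<union> \<Gamma>) (\<Delta> \<union> \<Delta>)"
    by (rule deriv.Cut[where S="{\<phi>}"]) (use a D_F[OF a(1)] in auto)
  then show ?thesis by simp
qed

lemma dtrans: "D \<Gamma> {\<psi>} \<Longrightarrow> D {\<psi>} {\<chi>} \<Longrightarrow> D \<Gamma> {\<chi>}"
proof -
  assume a: "D \<Gamma> {\<psi>}" "D {\<psi>} {\<chi>}"
  show ?thesis
  proof (rule cut1[where \<phi>=\<psi>])
    show "D \<Gamma> {\<psi>, \<chi>}" by (rule wk[OF a(1)]) (use D_F[OF a(1)] D_F[OF a(2)] in auto)
    show "D (insert \<psi> \<Gamma>) {\<chi>}" by (rule wk[OF a(2)]) (use D_F[OF a(1)] D_F[OF a(2)] in auto)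
  qed
qed

lemma eqv_trans: "eqv a b \<Longrightarrow> eqv b c \<Longrightarrow> eqv a c"
  using dtrans by blast

lemma lneg: "D \<Gamma> (insert \<phi> \<Delta>) \<Longrightarrow> D (insert (Neg \<phi>) \<Gamma>) \<Delta>"
  using deriv.LNeg[where S="{\<phi>}" and \<Gamma>=\<Gamma> and \<Delta>=\<Delta>] by simp

lemma rneg: "D (insert \<phi> \<Gamma>) \<Delta> \<Longrightarrow> D \<Gamma> (insert (Neg \<phi>) \<Delta>)"
  using deriv.RNeg[where S="{\<phi>}" and \<Gamma>=\<Gamma> and \<Delta>=\<Delta>] by simp

lemma lconj: "|S| <o |UNIV :: 'k set| \<Longrightarrow> D (S \<union> \<Gamma>) \<Delta> \<Longrightarrow> D (insert (Conj S) \<Gamma>) \<Delta>"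
  using deriv.LConj[where \<SS>="{S}" and \<Gamma>=\<Gamma> and \<Delta>=\<Delta>] by simp

lemma rdisj: "|S| <o |UNIV :: 'k set| \<Longrightarrow> D \<Gamma> (S \<union> \<Delta>) \<Longrightarrow> D \<Gamma> (insert (Disj S) \<Delta>)"
  using deriv.RDisj[where \<SS>="{S}" and \<Gamma>=\<Gamma> and \<Delta>=\<Delta>] by (simp add: Un_commute)

lemma rconj: "|S| <o |UNIV :: 'k set| \<Longrightarrow> S \<subseteq> F \<Longrightarrow> (\<And>\<psi>. \<psi> \<in> S \<Longrightarrow> D \<Gamma> (insert \<psi> \<Delta>)) \<Longrightarrow> \<Gamma> \<union> \<Delta> \<subseteq> F
   \<Longrightarrow> D \<Gamma> (insert (Conj S) \<Delta>)"
  using deriv.RConj[where \<SS>="{S}" and \<Gamma>=\<Gamma> and \<Delta>=\<Delta>] by simp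

lemma ldisj: "|S| <o |UNIV :: 'k set| \<Longrightarrow> S \<subseteq> F \<Longrightarrow> (\<And>\<psi>. \<psi> \<in> S \<Longrightarrow> D (insert \<psi> \<Gamma>) \<Delta>) \<Longrightarrow> \<Gamma> \<union> \<Delta> \<subseteq> F
   \<Longrightarrow> D (insert (Disj S) \<Gamma>) \<Delta>"
  using deriv.LDisj[where \<SS>="{S}" and \<Gamma>=\<Gamma> and \<Delta>=\<Delta>] by simp


abbreviation cnf :: "('g,'k) fm set set \<Rightarrow> ('g,'k) fm" where "cnf S \<equiv> Conj (Disj ` S)"

lemma cnf_elim: "S \<subseteq> Pow FO \<Longrightarrow> s \<in> S \<Longrightarrow> D {cnf S} {Disj s}"
proof -
  assume a: "S \<subseteq> Pow FO" "s \<in> S"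
  have "D (Disj ` S \<union> {}) {Disj s}"
    by (rule axw[where \<phi>="Disj s"]) (use a disjF in auto)
  then show ?thesis using lconj[OF small_image[OF small_PFO[OF a(1)]]] by simp
qed

lemma cnf_intro: "S \<subseteq> Pow FO \<Longrightarrow> \<Gamma> \<subseteq> F \<Longrightarrow> (\<And>s. s \<in> S \<Longrightarrow> D \<Gamma> {Disj s}) \<Longrightarrow> D \<Gamma> {cnf S}"
proof -
  assume a: "S \<subseteq> Pow FO" "\<Gamma> \<subseteq> F" "\<And>s. s \<in> S \<Longrightarrow> D \<Gamma> {Disj s}"
  show ?thesis
    by (rule rconj[where \<Delta>="{}"]) (use a small_image[OF small_PFO[OF a(1)]] disjF in auto)
qed

lemma disj_mono: "s \<subseteq> t \<Longrightarrow> t \<subseteq> FO \<Longrightarrow> D {Disj s} {Disj t}"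
proof -
  assume a: "s \<subseteq> t" "t \<subseteq> FO"
  show ?thesis
  proof (rule ldisj[where \<Gamma>="{}"])
    show "|s| <o |UNIV :: 'k set|" using a small_FO by blast
    show "s \<subseteq> F" using a FO_F by blast
    show "{} \<union> {Disj t} \<subseteq> F" using a disjF by auto
    fix y assume y: "y \<in> s"
    have "D {y} (t \<union> {})" by (rule axw[where \<phi>=y]) (use a y FO_F in auto)
    then show "D {y} {Disj t}" using rdisj[OF small_FO[OF a(2)]] by simp
  qed
qed

lemma L_conj:
  assumes sX: "|X| <o |UNIV :: 'k set|"
    and H: "\<forall>x\<in>X. \<exists>S. S \<subseteq> Pow FO \<and> eqv x (cnf S)"
  shows "\<exists>S. S \<subseteq> Pow FO \<and> eqv (Conj X) (cnf S)"
proof -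
  from H obtain f where f: "\<forall>x\<in>X. f x \<subseteq> Pow FO \<and> eqv x (cnf (f x))" by metis
  define Tt where "Tt = \<Union>(f ` X)"
  have Tt: "Tt \<subseteq> Pow FO" using f by (auto simp: Tt_def)
  have XF: "X \<subseteq> F" using f D_F by blast
  have CF: "Conj X \<in> F" using Fm_kappa.intros(4)[OF sX] XF by blast
  have 1: "D {Conj X} {cnf Tt}"
  proof (rule cnf_intro[OF Tt])
    show "{Conj X} \<subseteq> F" using CF by simp
    fix s assume "s \<in> Tt"
    then obtain x where x: "x \<in> X" "s \<in> f x" by (auto simp: Tt_def)
    have "D {x} {Disj s}" by (rule dtrans[of "{x}" "cnf (f x)"]) (use f x cnf_elim[of "f x" s] in auto)
    then have "D (X \<union> {}) {Disj s}" by (rule wk) (use x XF D_F[OF \<open>D {x} {Disj s}\<close>] in auto)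
    then show "D {Conj X} {Disj s}" using lconj[OF sX] by simp
  qed
  have 2: "D {cnf Tt} {Conj X}"
  proof -
    have "D (Disj ` Tt) {Conj X}"
    proof (rule rconj[OF sX XF])
      show "Disj ` Tt \<union> {} \<subseteq> F" using Tt disjF by auto
      fix x assume x: "x \<in> X"
      have "D (Disj ` Tt) {cnf (f x)}"
      proof (rule cnf_intro)
        show "f x \<subseteq> Pow FO" using f x by blast
        show "Disj ` Tt \<subseteq> F" using Tt disjF by auto
        fix s assume "s \<in> f x"
        then show "D (Disj ` Tt) {Disj s}"
          by (intro axw[where \<phi>="Disj s"]) (use x Tt disjF in \<open>auto simp: Tt_def\<close>)
      qed
      then show "D (Disj ` Tt) {x}" by (rule dtrans) (use f x in blast)
    qed
    then show ?thesis using lconj[OF small_image[OF small_PFO[OF Tt]]] by simp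
  qed
  show ?thesis using 1 2 Tt by blast
qed

lemma L_disj:
  assumes sX: "|X| <o |UNIV :: 'k set|"
    and H: "\<forall>x\<in>X. \<exists>S. S \<subseteq> Pow FO \<and> eqv x (cnf S)"
  shows "\<exists>S. S \<subseteq> Pow FO \<and> eqv (Disj X) (cnf S)"
proof -
  from H obtain f where f: "\<forall>x\<in>X. f x \<subseteq> Pow FO \<and> eqv x (cnf (f x))" by metis
  define Tt where "Tt = {\<Union>x\<in>X. c x | c. \<forall>x\<in>X. c x \<in> f x}"
  have f1: "\<forall>x\<in>X. f x \<subseteq> Pow FO" and f2: "\<forall>x\<in>X. eqv x (cnf (f x))" using f by auto
  have Tt: "Tt \<subseteq> Pow FO"
  proof
    fix t assume "t \<in> Tt"
    then obtain c where c: "\<forall>x\<in>X. c x \<in> f x" and t: "t = (\<Union>x\<in>X. c x)" unfolding Tt_def by blast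
    show "t \<in> Pow FO" unfolding t using c f1 by blast
  qed
  have XF: "X \<subseteq> F" using f2 D_F by blast
  have DF: "Disj X \<in> F" using Fm_kappa.intros(5)[OF sX] XF by blast
  have TtF: "Disj ` Tt \<subseteq> F" using Tt disjF by auto
  have 1: "D {Disj X} {cnf Tt}"
  proof (rule cnf_intro[OF Tt])
    show "{Disj X} \<subseteq> F" using DF by simp
    fix t assume "t \<in> Tt"
    then obtain c where c: "\<forall>x\<in>X. c x \<in> f x" and t: "t = (\<Union>x\<in>X. c x)" unfolding Tt_def by blast
    have tFO: "t \<subseteq> FO" using \<open>t \<in> Tt\<close> Tt by blast
    show "D {Disj X} {Disj t}"
    proof (rule ldisj[where \<Gamma>="{}", OF sX XF])
      show "{} \<union> {Disj t} \<subseteq> F" using disjF tFO by auto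
      fix x assume x: "x \<in> X"
      have a: "D {x} {cnf (f x)}" using f2 x by blast
      have b: "D {cnf (f x)} {Disj (c x)}" using cnf_elim[of "f x" "c x"] f1 c x by blast
      have cc: "D {Disj (c x)} {Disj t}" by (rule disj_mono[OF _ tFO]) (use t x in blast)
      show "D {x} {Disj t}" using dtrans[OF dtrans[OF a b] cc] by simp
    qed
  qed
  define Y where "Y = (\<lambda>x. cnf (f x)) ` X"
  define SS where "SS = (\<lambda>x. Disj ` (f x)) ` X"
  have YSS: "Y = Conj ` SS" by (auto simp: Y_def SS_def)
  have sY: "|Y| <o |UNIV :: 'k set|" unfolding Y_def by (rule small_image[OF sX])
  have YF: "Y \<subseteq> F" using f cnfF by (auto simp: Y_def)
  have a: "D (Disj ` Tt) Y"
  proof -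
    have "D (Disj ` Tt) ({} \<union> Conj ` SS)"
    proof (rule deriv.RConj)
      show "\<forall>S\<in>SS. |S| <o |UNIV :: 'k set| \<and> S \<subseteq> F"
      proof
        fix S assume "S \<in> SS"
        then obtain x where x: "x \<in> X" "S = Disj ` f x" by (auto simp: SS_def)
        have "f x \<subseteq> Pow FO" using f1 x by blast
        then have "|Disj ` f x| <o |UNIV :: 'k set|" "Disj ` f x \<subseteq> F"
          using small_image[OF small_PFO, of "f x" Disj] disjF by auto
        then show "|S| <o |UNIV :: 'k set| \<and> S \<subseteq> F" using x(2) by simp
      qed
      show "Disj ` Tt \<union> {} \<subseteq> F" using TtF by simp
      show "\<forall>c. (\<forall>S\<in>SS. c S \<in> S) \<longrightarrow> D (Disj ` Tt) ({} \<union> c ` SS)"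
      proof (intro allI impI)
        fix c assume c: "\<forall>S\<in>SS. c S \<in> S"
        define s where "s x = (SOME s. s \<in> f x \<and> Disj s = c (Disj ` (f x)))" for x
        have s: "s x \<in> f x \<and> Disj (s x) = c (Disj ` (f x))" if x: "x \<in> X" for x
        proof -
          have "c (Disj ` (f x)) \<in> Disj ` (f x)" using c x by (auto simp: SS_def)
          then have "\<exists>s. s \<in> f x \<and> Disj s = c (Disj ` (f x))" by auto
          then show ?thesis unfolding s_def by (rule someI_ex)
        qed
        define t where "t = (\<Union>x\<in>X. s x)"
        have sf: "\<forall>x\<in>X. s x \<in> f x" using s by blast
        have tT: "t \<in> Tt" unfolding Tt_def t_def by (rule CollectI, rule exI[where x=s]) (use sf in simp)
        have tFO: "t \<subseteq> FO" using tT Tt by blast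
        have cF: "c ` SS \<subseteq> F"
        proof
          fix z assume "z \<in> c ` SS"
          then obtain x where x: "x \<in> X" "z = c (Disj ` f x)" by (auto simp: SS_def)
          then have "z \<in> Disj ` f x" using c by (auto simp: SS_def)
          then obtain u where u: "u \<in> f x" "z = Disj u" by auto
          have "u \<subseteq> FO" using f1 x u by blast
          then show "z \<in> F" using u disjF by simp
        qed
        have "D {Disj t} (c ` SS)"
        proof (rule ldisj[where \<Gamma>="{}"])
          show "|t| <o |UNIV :: 'k set|" using small_FO tFO by blast
          show "t \<subseteq> F" using tFO FO_F by blast
          show "{} \<union> c ` SS \<subseteq> F" using cF by simp
          fix y assume "y \<in> t"
          then obtain x where x: "x \<in> X" "y \<in> s x" unfolding t_def by blast
          have sFO: "s x \<subseteq> FO" using s[OF x(1)] f1 x(1) by blast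
          have "D {y} (s x \<union> {})" by (rule axw[where \<phi>=y]) (use x sFO FO_F in auto)
          then have "D {y} {Disj (s x)}" using rdisj[OF small_FO[OF sFO]] by simp
          moreover have "Disj (s x) \<in> c ` SS" using s[OF x(1)] x(1) by (auto simp: SS_def)
          ultimately show "D {y} (c ` SS)" using wk[of "{y}" "{Disj (s x)}" "{y}" "c ` SS"] cF x sFO FO_F by blast
        qed
        then show "D (Disj ` Tt) ({} \<union> c ` SS)" by (rule wk) (use tT TtF cF in auto)
      qed
    qed
    then show ?thesis using YSS by simp
  qed
  have b: "D (Disj ` Tt) {Disj Y}" using rdisj[OF sY, of "Disj ` Tt" "{}"] a by simp
  have c: "D {Disj Y} {Disj X}"
  proof (rule ldisj[where \<Gamma>="{}", OF sY YF])
    show "{} \<union> {Disj X} \<subseteq> F" using DF by simp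
    fix y assume "y \<in> Y"
    then obtain x where x: "x \<in> X" "y = cnf (f x)" by (auto simp: Y_def)
    have "D {x} (X \<union> {})" by (rule axw[where \<phi>=x]) (use x XF in auto)
    then have "D {x} {Disj X}" using rdisj[OF sX] by simp
    then show "D {y} {Disj X}" by (rule dtrans[rotated]) (use f2 x in blast)
  qed
  have "D (Disj ` Tt) {Disj X}" using dtrans[OF b c] .
  then have 2: "D {cnf Tt} {Disj X}" using lconj[OF small_image[OF small_PFO[OF Tt]]] by simp
  show ?thesis using 1 2 Tt by blast
qed


lemma eqv_Disj_single: "x \<in> F \<Longrightarrow> eqv x (Disj {x})"
proof
  assume x: "x \<in> F"
  have "D {x} ({x} \<union> {})" using deriv.Ax[OF x] by simp
  then show "D {x} {Disj {x}}" using rdisj[OF small_single] by simp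
  show "D {Disj {x}} {x}"
  proof (rule ldisj[where \<Gamma>="{}", OF small_single])
    show "{x} \<subseteq> F" "{} \<union> {x} \<subseteq> F" using x by auto
    fix y assume "y \<in> {x}" then show "D {y} {x}" using deriv.Ax[OF x] by simp
  qed
qed

lemma disj_cnf: "B \<subseteq> FO \<Longrightarrow> eqv (Disj B) (cnf {B})"
proof
  assume B: "B \<subseteq> FO"
  have DB: "Disj B \<in> F" using disjF[OF B] .
  show "D {Disj B} {cnf {B}}"
    by (rule cnf_intro) (use B DB deriv.Ax[OF DB] in auto)
  have "D ({Disj B} \<union> {}) {Disj B}" using deriv.Ax[OF DB] by simp
  then show "D {cnf {B}} {Disj B}" using lconj[OF small_single, of "Disj B" "{}"] by simp
qed

lemma neg_cong: "eqv a b \<Longrightarrow> eqv (Neg a) (Neg b)"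
proof -
  have *: "D {Neg a} {Neg b}" if h: "D {b} {a}" for a b
  proof -
    have "D (insert (Neg a) {b}) {}" using lneg[of "{b}" a "{}"] h by simp
    then have "D (insert b {Neg a}) {}" by (simp add: insert_commute)
    then show ?thesis using rneg[of b "{Neg a}" "{}"] by simp
  qed
  assume "eqv a b" then show ?thesis using * by blast
qed

lemma neg_conj:
  assumes sY: "|Y| <o |UNIV :: 'k set|" and YF: "Y \<subseteq> F"
  shows "eqv (Neg (Conj Y)) (Disj (Neg ` Y))"
proof
  have NYF: "Neg ` Y \<subseteq> F" using YF by (auto intro: Fm_kappa.intros)
  have sNY: "|Neg ` Y| <o |UNIV :: 'k set|" by (rule small_image[OF sY])
  have "D {} (insert (Conj Y) (Neg ` Y))"
  proof (rule rconj[OF sY YF])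
    show "{} \<union> Neg ` Y \<subseteq> F" using NYF by simp
    fix y assume y: "y \<in> Y"
    have yF: "y \<in> F" using y YF by blast
    have "D (insert y {}) {y}" using deriv.Ax[OF yF] by simp
    then have "D {} (insert (Neg y) {y})" by (rule rneg)
    then show "D {} (insert y (Neg ` Y))" by (rule wk) (use y YF NYF in auto)
  qed
  then have "D (insert (Neg (Conj Y)) {}) (Neg ` Y)" by (rule lneg)
  then have "D {Neg (Conj Y)} (Neg ` Y \<union> {})" by simp
  then show "D {Neg (Conj Y)} {Disj (Neg ` Y)}" using rdisj[OF sNY] by simp
  have CF: "Conj Y \<in> F" using Fm_kappa.intros(4)[OF sY] YF by blast
  have NCF: "Neg (Conj Y) \<in> F" using CF by (rule Fm_kappa.intros)
  show "D {Disj (Neg ` Y)} {Neg (Conj Y)}"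
  proof (rule ldisj[where \<Gamma>="{}", OF sNY NYF])
    show "{} \<union> {Neg (Conj Y)} \<subseteq> F" using NCF by simp
    fix z assume "z \<in> Neg ` Y"
    then obtain y where y: "y \<in> Y" "z = Neg y" by blast
    have "D (Y \<union> {}) {y}" by (rule axw[where \<phi>=y]) (use y YF in auto)
    then have "D (insert (Conj Y) {}) {y}" by (rule lconj[OF sY])
    then have "D {Conj Y} (insert y {})" by simp
    then have "D (insert (Neg y) {Conj Y}) {}" by (rule lneg)
    then have "D (insert (Conj Y) {Neg y}) {}" by (simp add: insert_commute)
    then have "D {Neg y} (insert (Neg (Conj Y)) {})" by (rule rneg)
    then show "D {z} {Neg (Conj Y)}" using y by simp
  qed
qed

lemma neg_disj:
  assumes sS: "|S| <o |UNIV :: 'k set|" and SF: "S \<subseteq> F"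
  shows "eqv (Neg (Disj S)) (Conj (Neg ` S))"
proof
  have NSF: "Neg ` S \<subseteq> F" using SF by (auto intro: Fm_kappa.intros)
  have sNS: "|Neg ` S| <o |UNIV :: 'k set|" by (rule small_image[OF sS])
  have DF: "Disj S \<in> F" using Fm_kappa.intros(5)[OF sS] SF by blast
  have NDF: "Neg (Disj S) \<in> F" using DF by (rule Fm_kappa.intros)
  show "D {Neg (Disj S)} {Conj (Neg ` S)}"
  proof (rule rconj[where \<Delta>="{}", OF sNS NSF])
    show "{Neg (Disj S)} \<union> {} \<subseteq> F" using NDF by simp
    fix z assume "z \<in> Neg ` S"
    then obtain y where y: "y \<in> S" "z = Neg y" by blast
    have "D {y} (S \<union> {})" by (rule axw[where \<phi>=y]) (use y SF in auto)
    then have "D {y} (insert (Disj S) {})" by (rule rdisj[OF sS])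
    then have "D (insert (Neg (Disj S)) {y}) {}" by (rule lneg)
    then have "D (insert y {Neg (Disj S)}) {}" by (simp add: insert_commute)
    then have "D {Neg (Disj S)} (insert (Neg y) {})" by (rule rneg)
    then show "D {Neg (Disj S)} (insert z {})" using y by simp
  qed
  have "D {Disj S} S"
  proof (rule ldisj[where \<Gamma>="{}", OF sS SF])
    show "{} \<union> S \<subseteq> F" using SF by simp
    fix y assume "y \<in> S" then show "D {y} S" by (intro axw[where \<phi>=y]) (use SF in auto)
  qed
  then have "D (Neg ` S \<union> {Disj S}) {}" using deriv.LNeg[where S=S and \<Gamma>="{Disj S}" and \<Delta>="{}"] by simp
  then have "D (insert (Disj S) (Neg ` S)) {}" by simp
  then have "D (Neg ` S) (insert (Neg (Disj S)) {})" by (rule rneg)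
  then have "D (Neg ` S \<union> {}) {Neg (Disj S)}" by simp
  then show "D {Conj (Neg ` S)} {Neg (Disj S)}" using lconj[OF sNS] by simp
qed

lemma conj_cnf:
  assumes Z: "Z \<subseteq> FO"
  shows "eqv (Conj Z) (cnf ((\<lambda>z. {z}) ` Z))"
proof
  have sZ: "|Z| <o |UNIV :: 'k set|" using small_FO[OF Z] .
  have ZF: "Z \<subseteq> F" using Z FO_F by blast
  have P: "(\<lambda>z. {z}) ` Z \<subseteq> Pow FO" using Z by auto
  have CF: "Conj Z \<in> F" using Fm_kappa.intros(4)[OF sZ] ZF by blast
  show "D {Conj Z} {cnf ((\<lambda>z. {z}) ` Z)}"
  proof (rule cnf_intro[OF P])
    show "{Conj Z} \<subseteq> F" using CF by simp
    fix s assume "s \<in> (\<lambda>z. {z}) ` Z"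
    then obtain z where z: "z \<in> Z" "s = {z}" by blast
    have zF: "z \<in> F" using z ZF by blast
    have "D {z} ({z} \<union> {})" using deriv.Ax[OF zF] by simp
    then have "D {z} {Disj {z}}" using rdisj[OF small_single] by simp
    then have "D (Z \<union> {}) {Disj {z}}" by (rule wk) (use z ZF disjF[of "{z}"] Z in auto)
    then show "D {Conj Z} {Disj s}" using lconj[OF sZ] z by simp
  qed
  have "D (Disj ` (\<lambda>z. {z}) ` Z) {Conj Z}"
  proof (rule rconj[where \<Delta>="{}", OF sZ ZF])
    have DZ: "Disj ` (\<lambda>z. {z}) ` Z \<subseteq> F"
    proof
      fix w assume "w \<in> Disj ` (\<lambda>z. {z}) ` Z"
      then obtain z where "z \<in> Z" "w = Disj {z}" by blast
      then show "w \<in> F" using disjF[of "{z}"] Z by auto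
    qed
    then show "Disj ` (\<lambda>z. {z}) ` Z \<union> {} \<subseteq> F" by simp
    fix z assume z: "z \<in> Z"
    have zF: "z \<in> F" using z ZF by blast
    have "D {Disj {z}} {z}" using eqv_Disj_single[OF zF] by blast
    moreover have "Disj {z} \<in> F" using disjF[of "{z}"] Z z by auto
    moreover have "Disj ` (\<lambda>z. {z}) ` Z \<subseteq> F"
    proof
      fix w assume "w \<in> Disj ` (\<lambda>z. {z}) ` Z"
      then obtain z where "z \<in> Z" "w = Disj {z}" by blast
      then show "w \<in> F" using disjF[of "{z}"] Z by auto
    qed
    ultimately show "D (Disj ` (\<lambda>z. {z}) ` Z) {z}" using wk[of "{Disj {z}}" "{z}" "Disj ` (\<lambda>z. {z}) ` Z" "{z}"] z zF by blast
  qed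
  then show "D {cnf ((\<lambda>z. {z}) ` Z)} {Conj Z}"
    using lconj[OF small_image[OF small_PFO[OF P]]] by simp
qed

lemma L_neg:
  assumes S: "S \<subseteq> Pow FO"
  shows "\<exists>S'. S' \<subseteq> Pow FO \<and> eqv (Neg (cnf S)) (cnf S')"
proof -
  define Y where "Y = Disj ` S"
  have sY: "|Y| <o |UNIV :: 'k set|" unfolding Y_def by (rule small_image[OF small_PFO[OF S]])
  have YF: "Y \<subseteq> F" unfolding Y_def using S disjF by auto
  have e1: "eqv (Neg (cnf S)) (Disj (Neg ` Y))" using neg_conj[OF sY YF] unfolding Y_def .
  have H: "\<forall>x\<in>Neg ` Y. \<exists>S'. S' \<subseteq> Pow FO \<and> eqv x (cnf S')"
  proof
    fix x assume "x \<in> Neg ` Y"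
    then obtain s where s: "s \<in> S" "x = Neg (Disj s)" unfolding Y_def by blast
    have sFO: "s \<subseteq> FO" using s S by blast
    have a: "eqv x (Conj (Neg ` s))" using neg_disj[OF small_FO[OF sFO]] sFO FO_F s(2) by blast
    have NFO: "Neg ` s \<subseteq> FO" using sFO by (auto intro: Fm_omega.intros)
    have b: "eqv (Conj (Neg ` s)) (cnf ((\<lambda>z. {z}) ` (Neg ` s)))" by (rule conj_cnf[OF NFO])
    have P: "(\<lambda>z. {z}) ` (Neg ` s) \<subseteq> Pow FO" using NFO by auto
    show "\<exists>S'. S' \<subseteq> Pow FO \<and> eqv x (cnf S')" using eqv_trans[OF a b] P by blast
  qed
  obtain S' where S': "S' \<subseteq> Pow FO" "eqv (Disj (Neg ` Y)) (cnf S')"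
    using L_disj[OF small_image[OF sY] H] by blast
  show ?thesis using eqv_trans[OF e1 S'(2)] S'(1) by blast
qed

lemma box_cong: "eqv a b \<Longrightarrow> eqv (Box a) (Box b)"
  using deriv.Nec[where S="{a}" and \<phi>=b] deriv.Nec[where S="{b}" and \<phi>=a] by auto

lemma box_conj:
  assumes sY: "|Y| <o |UNIV :: 'k set|" and YF: "Y \<subseteq> F"
  shows "eqv (Box (Conj Y)) (Conj (Box ` Y))"
proof
  have BYF: "Box ` Y \<subseteq> F" using YF by (auto intro: Fm_kappa.intros)
  have sBY: "|Box ` Y| <o |UNIV :: 'k set|" by (rule small_image[OF sY])
  have CF: "Conj Y \<in> F" using Fm_kappa.intros(4)[OF sY] YF by blast
  have BCF: "Box (Conj Y) \<in> F" using CF by (rule Fm_kappa.intros)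
  show "D {Box (Conj Y)} {Conj (Box ` Y)}"
  proof (rule rconj[where \<Delta>="{}", OF sBY BYF])
    show "{Box (Conj Y)} \<union> {} \<subseteq> F" using BCF by simp
    fix z assume "z \<in> Box ` Y"
    then obtain y where y: "y \<in> Y" "z = Box y" by blast
    have "D (Y \<union> {}) {y}" by (rule axw[where \<phi>=y]) (use y YF in auto)
    then have "D {Conj Y} {y}" using lconj[OF sY] by simp
    then have "D (Box ` {Conj Y}) {Box y}" by (rule deriv.Nec)
    then show "D {Box (Conj Y)} (insert z {})" using y by simp
  qed
  have "D Y {Conj Y}"
    by (rule rconj[where \<Delta>="{}", OF sY YF]) (use YF in \<open>auto intro: axw\<close>)
  then have "D (Box ` Y) {Box (Conj Y)}" by (rule deriv.Nec)
  then have "D (Box ` Y \<union> {}) {Box (Conj Y)}" by simp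
  then show "D {Conj (Box ` Y)} {Box (Conj Y)}" using lconj[OF sBY] by simp
qed

lemma topn: "D {} {(Box ^^ n) (Disj {Conj {}})}"
proof (induction n)
  case 0
  have tF: "Conj {} \<in> F" using top_FO FO_F by blast
  have "D {} (insert (Conj {}) {})" by (rule rconj) (use small_empty in auto)
  then have "D {} ({Conj {}} \<union> {})" by simp
  then show ?case using rdisj[OF small_single] by simp
next
  case (Suc n)
  then have "D (Box ` {}) {Box ((Box ^^ n) (Disj {Conj {}}))}" by (rule deriv.Nec)
  then show ?case by simp
qed

lemma box_disj:
  assumes s: "s \<subseteq> FO"
  shows "eqv (Box (Disj s)) (Disj {Box (Disj J) | J. finite J \<and> J \<subseteq> s})"
proof
  define B where "B = {Box (Disj J) | J. finite J \<and> J \<subseteq> s}"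
  have BFO: "B \<subseteq> FO"
  proof
    fix b assume "b \<in> B"
    then obtain J where J: "b = Box (Disj J)" "finite J" "J \<subseteq> s" unfolding B_def by blast
    have "Disj J \<in> FO" using J s by (intro Fm_omega.intros) auto
    then show "b \<in> FO" using J by (auto intro: Fm_omega.intros)
  qed
  have sB: "|B| <o |UNIV :: 'k set|" using small_FO[OF BFO] .
  have BF: "B \<subseteq> F" using BFO FO_F by blast
  have DBF: "Disj B \<in> F" using disjF[OF BFO] .
  have ss: "|s| <o |UNIV :: 'k set|" using small_FO[OF s] .
  have sF: "s \<subseteq> F" using s FO_F by blast
  have DsF: "Disj s \<in> F" using disjF[OF s] .
  show "D {Disj B} {Box (Disj s)}"
  proof (rule ldisj[where \<Gamma>="{}", OF sB BF])
    show "{} \<union> {Box (Disj s)} \<subseteq> F" using DsF by (auto intro: Fm_kappa.intros)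
    fix b assume "b \<in> B"
    then obtain J where J: "b = Box (Disj J)" "finite J" "J \<subseteq> s" unfolding B_def by blast
    have "D {Disj J} {Disj s}" by (rule disj_mono[OF J(3) s])
    then have "D (Box ` {Disj J}) {Box (Disj s)}" by (rule deriv.Nec)
    then show "D {b} {Box (Disj s)}" using J by simp
  qed
  define top where "top = (Conj {} :: ('g,'k) fm)"
  have topF: "top \<in> F" unfolding top_def using top_FO FO_F by blast
  define Sn where "Sn n = (if n = 1 then s else {top})" for n :: nat
  have SnF: "\<forall>n. |Sn n| <o |UNIV :: 'k set| \<and> Sn n \<subseteq> F"
    unfolding Sn_def using ss sF topF small_single by auto
  have boxF: "(Box ^^ n) (Disj X) \<in> F" if "X \<subseteq> Sn n" for X n
  proof -
    have "|X| <o |UNIV :: 'k set|" using small_sub[OF that] SnF by blast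
    moreover have "X \<subseteq> F" using that SnF by blast
    ultimately have "Disj X \<in> F" using Fm_kappa.intros(5) by blast
    then show ?thesis by (rule funpow_box)
  qed
  have conc: "D (range (\<lambda>n. (Box ^^ n) (Disj (Sn n))) \<union> {}) {Disj B}"
  proof (rule deriv.lf)
    show "\<forall>n. |Sn n| <o |UNIV :: 'k set| \<and> Sn n \<subseteq> F" by (rule SnF)
    show "{} \<union> {Disj B} \<subseteq> F" using DBF by simp
    show "\<forall>I. finite I \<and> I \<subseteq> (\<Union>n. Sn n) \<longrightarrow>
        D (range (\<lambda>n. (Box ^^ n) (Disj (I \<inter> Sn n))) \<union> {}) {Disj B}"
    proof (intro allI impI)
      fix I :: "('g,'k) fm set" assume I: "finite I \<and> I \<subseteq> (\<Union>n. Sn n)"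
      define Ga where "Ga = range (\<lambda>n. (Box ^^ n) (Disj (I \<inter> Sn n)))"
      have GaF: "Ga \<union> {Disj B} \<subseteq> F" unfolding Ga_def using boxF DBF by auto
      have "D Ga {Disj B}"
      proof (cases "top \<in> I")
        case True
        define b where "b = Box (Disj (I \<inter> s))"
        have bG: "b \<in> Ga" unfolding Ga_def b_def
          by (rule range_eqI[where x=1]) (simp add: Sn_def)
        have bB: "b \<in> B" unfolding B_def b_def using I by blast
        have "D {b} (B \<union> {})" by (rule axw[where \<phi>=b]) (use bB BF in auto)
        then have "D {b} {Disj B}" using rdisj[OF sB] by simp
        then show ?thesis by (rule wk) (use bG GaF in auto)
      next
        case False
        have eq: "(Box ^^ 0) (Disj (I \<inter> Sn 0)) = Disj {}" using False by (auto simp: Sn_def)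
        have bG: "Disj {} \<in> Ga" unfolding Ga_def by (rule range_eqI[where x=0]) (use eq in simp)
        have "D (insert (Disj {}) Ga) {Disj B}"
          by (rule ldisj) (use small_empty GaF in auto)
        then show ?thesis using bG by (simp add: insert_absorb)
      qed
      then show "D (range (\<lambda>n. (Box ^^ n) (Disj (I \<inter> Sn n))) \<union> {}) {Disj B}"
        unfolding Ga_def by simp
    qed
  qed
  define R where "R = (\<lambda>n. (Box ^^ n) (Disj {top})) ` {n. n \<noteq> 1}"
  have eqR: "range (\<lambda>n. (Box ^^ n) (Disj (Sn n))) \<union> {} = R \<union> {Box (Disj s)}"
  proof -
    have "range (\<lambda>n. (Box ^^ n) (Disj (Sn n))) = R \<union> {Box (Disj s)}"
    proof
      show "range (\<lambda>n. (Box ^^ n) (Disj (Sn n))) \<subseteq> R \<union> {Box (Disj s)}"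
        unfolding R_def Sn_def by auto
      show "R \<union> {Box (Disj s)} \<subseteq> range (\<lambda>n. (Box ^^ n) (Disj (Sn n)))"
      proof
        fix z assume "z \<in> R \<union> {Box (Disj s)}"
        then show "z \<in> range (\<lambda>n. (Box ^^ n) (Disj (Sn n)))"
        proof
          assume "z \<in> R"
          then obtain n where "n \<noteq> 1" "z = (Box ^^ n) (Disj {top})" unfolding R_def by blast
          then show ?thesis unfolding Sn_def by (intro range_eqI[where x=n]) simp
        next
          assume "z \<in> {Box (Disj s)}"
          then show ?thesis unfolding Sn_def by (intro range_eqI[where x=1]) simp
        qed
      qed
    qed
    then show ?thesis by simp
  qed
  have "D ({} \<union> {Box (Disj s)}) ({} \<union> {Disj B})"
  proof (rule deriv.Cut[where S=R])
    show "\<forall>\<phi>\<in>R. D {} ({} \<union> {\<phi>})" unfolding R_def top_def using topn by auto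
    show "D (R \<union> {Box (Disj s)}) {Disj B}" using conc eqR by simp
    show "{} \<union> {} \<subseteq> F" by simp
  qed
  then show "D {Box (Disj s)} {Disj B}" by simp
qed

lemma L_box:
  assumes S: "S \<subseteq> Pow FO"
  shows "\<exists>S'. S' \<subseteq> Pow FO \<and> eqv (Box (cnf S)) (cnf S')"
proof -
  define Y where "Y = Disj ` S"
  have sY: "|Y| <o |UNIV :: 'k set|" unfolding Y_def by (rule small_image[OF small_PFO[OF S]])
  have YF: "Y \<subseteq> F" unfolding Y_def using S disjF by auto
  have e1: "eqv (Box (cnf S)) (Conj (Box ` Y))" using box_conj[OF sY YF] unfolding Y_def .
  have H: "\<forall>x\<in>Box ` Y. \<exists>S'. S' \<subseteq> Pow FO \<and> eqv x (cnf S')"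
  proof
    fix x assume "x \<in> Box ` Y"
    then obtain s where s: "s \<in> S" "x = Box (Disj s)" unfolding Y_def by blast
    have sFO: "s \<subseteq> FO" using s S by blast
    define B where "B = {Box (Disj J) | J. finite J \<and> J \<subseteq> s}"
    have a: "eqv x (Disj B)" using box_disj[OF sFO] s(2) unfolding B_def by simp
    have BFO: "B \<subseteq> FO"
    proof
      fix b assume "b \<in> B"
      then obtain J where J: "b = Box (Disj J)" "finite J" "J \<subseteq> s" unfolding B_def by blast
      have "Disj J \<in> FO" using J sFO by (intro Fm_omega.intros) auto
      then show "b \<in> FO" using J by (auto intro: Fm_omega.intros)
    qed
    have b: "eqv (Disj B) (cnf {B})" by (rule disj_cnf[OF BFO])
    have P: "{B} \<subseteq> Pow FO" using BFO by auto
    show "\<exists>S'. S' \<subseteq> Pow FO \<and> eqv x (cnf S')" using eqv_trans[OF a b] P by blast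
  qed
  obtain S' where S': "S' \<subseteq> Pow FO" "eqv (Conj (Box ` Y)) (cnf S')"
    using L_conj[OF small_image[OF sY] H] by blast
  show ?thesis using eqv_trans[OF e1 S'(2)] S'(1) by blast
qed

lemma main: "\<phi> \<in> F \<Longrightarrow> \<exists>S. S \<subseteq> Pow FO \<and> eqv \<phi> (cnf S)"
proof (induction rule: Fm_kappa.induct)
  case (1 g)
  have gO: "Var g \<in> FO" using 1 by (rule Fm_omega.intros)
  have gF: "Var g \<in> F" using gO FO_F by blast
  have a: "eqv (Var g) (Disj {Var g})" by (rule eqv_Disj_single[OF gF])
  have gs: "{Var g} \<subseteq> FO" using gO by simp
  have b: "eqv (Disj {Var g}) (cnf {{Var g}})" by (rule disj_cnf[OF gs])
  have P: "{{Var g}} \<subseteq> Pow FO" using gO by simp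
  show ?case by (rule exI[of _ "{{Var g}}"], rule conjI[OF P eqv_trans[OF a b]])
next
  case (2 \<phi>)
  then obtain S where S: "S \<subseteq> Pow FO" "eqv \<phi> (cnf S)" by blast
  obtain S' where S': "S' \<subseteq> Pow FO" "eqv (Neg (cnf S)) (cnf S')" using L_neg[OF S(1)] by blast
  show ?case by (rule exI[of _ S'], rule conjI[OF S'(1) eqv_trans[OF neg_cong[OF S(2)] S'(2)]])
next
  case (3 \<phi>)
  then obtain S where S: "S \<subseteq> Pow FO" "eqv \<phi> (cnf S)" by blast
  obtain S' where S': "S' \<subseteq> Pow FO" "eqv (Box (cnf S)) (cnf S')" using L_box[OF S(1)] by blast
  show ?case by (rule exI[of _ S'], rule conjI[OF S'(1) eqv_trans[OF box_cong[OF S(2)] S'(2)]])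
next
  case (4 S)
  have "\<forall>x\<in>S. \<exists>S'. S' \<subseteq> Pow FO \<and> eqv x (cnf S')" using 4(2) by blast
  then show ?case by (rule L_conj[OF 4(1)])
next
  case (5 S)
  have "\<forall>x\<in>S. \<exists>S'. S' \<subseteq> Pow FO \<and> eqv x (cnf S')" using 5(2) by blast
  then show ?case by (rule L_disj[OF 5(1)])
qed

lemma iff_deriv: "eqv a b \<Longrightarrow> D {} {fm_iff a b}"
proof -
  assume e: "eqv a b"
  have aF: "a \<in> F" and bF: "b \<in> F" using D_F[of "{a}" "{b}"] e by auto
  have NaF: "Neg a \<in> F" and NbF: "Neg b \<in> F" using aF bF by (auto intro: Fm_kappa.intros)
  have d: "D {} {Disj {Neg x, y}}" if h: "D {x} {y}" for x y
  proof -
    have "D (insert x {}) {y}" using h by simp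
    then have "D {} (insert (Neg x) {y})" by (rule rneg)
    then have "D {} ({Neg x, y} \<union> {})" by simp
    then show ?thesis using rdisj[OF small_pair] by simp
  qed
  have d1F: "Disj {Neg a, b} \<in> F" by (rule Fm_kappa.intros(5)[OF small_pair]) (use bF NaF in auto)
  have d2F: "Disj {Neg b, a} \<in> F" by (rule Fm_kappa.intros(5)[OF small_pair]) (use aF NbF in auto)
  have d1: "D {} {Disj {Neg a, b}}" using d e by blast
  have d2: "D {} {Disj {Neg b, a}}" using d e by blast
  show ?thesis unfolding fm_iff_def
  proof (rule rconj[where \<Delta>="{}", OF small_pair])
    show "{Disj {Neg a, b}, Disj {Neg b, a}} \<subseteq> F" using d1F d2F by simp
    show "{} \<union> {} \<subseteq> F" by simp
    fix \<psi> assume "\<psi> \<in> {Disj {Neg a, b}, Disj {Neg b, a}}"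
    then show "D {} (insert \<psi> {})" using d1 d2 by auto
  qed
qed

end

theorem theorem4p6:
  fixes G :: "'g set" and L :: "nat mfm set" and T :: "('g,'k) fm set"
    and \<phi> :: "('g,'k) fm"
  assumes "normal_modal_logic L"
    and "finite_model_property L"
    and "T \<subseteq> Fm_kappa G"
    and "regularCard |UNIV :: 'k set|"
    and "|Pow (Fm_omega G :: ('g,'k) fm set)| <o |UNIV :: 'k set|"
    and "\<phi> \<in> Fm_kappa G"
  shows "\<exists>\<SS> \<subseteq> Pow (Fm_omega G).
           deriv G L T {} {fm_iff \<phi> (Conj (Disj ` \<SS>))}"
proof -
  obtain S where S: "S \<subseteq> Pow (Fm_omega G :: ('g,'k) fm set)"
    "deriv G L T {\<phi>} {Conj (Disj ` S)} \<and> deriv G L T {Conj (Disj ` S)} {\<phi>}"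
    using main[OF assms(5) assms(6), of L T] by blast
  show ?thesis using iff_deriv[OF assms(5) S(2)] S(1) by blast
qed

end
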